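(* Let $f(z)=\sum_{k\ge0}f_kz^k$ be holomorphic on the open unit disk, $0<r<1$, and let $N(n)$ be an increasing sequence of integers with $N(n)/n\to\infty$ such that for each $n$ there are $P_n\in\mathcal P_n$ and $Q_n\in\mathcal P_1$, $Q_n\neq0$, with $Q_nf-P_n$ having at least $N(n)$ zeros in $\overline\Delta_r$, normalized so that $Q_n(z)=\alpha_nz-1$ with $\alpha_n\in\mathbb C$ or $Q_n(z)=z$ (written $\alpha_n=\infty$, with $|\infty|=\infty$). Suppose $f$ is holomorphic on $\Delta_s=\{|z|<s\}$ for some $1\le s\le\infty$ (with $\Delta_\infty=\mathbb C$, $1/\infty=0$). If $\liminf_{n\to\infty}|\alpha_n|>1/s$, then $f$ is a polynomial.
   Context: $\mathcal P_n$ is the space of complex polynomials of degree at most $n$; zeros are counted with multiplicity. *)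

theory Defs
  imports "HOL-Complex_Analysis.Complex_Analysis" "HOL-Computational_Algebra.Polynomial"
begin

definition zero_count :: "(complex \<Rightarrow> complex) \<Rightarrow> complex set \<Rightarrow> enat" where
  "zero_count g K =
     (if finite {z\<in>K. g z = 0}
      then enat (\<Sum>z\<in>{z\<in>K. g z = 0}. nat (zorder g z))
      else \<infinity>)"

text \<open>Normalized denominators: Some a encodes Q(z) = a z - 1, None (alpha = infinity) encodes Q(z) = z.\<close>
fun Qnorm :: "complex option \<Rightarrow> complex \<Rightarrow> complex" where
  "Qnorm None z = z"
| "Qnorm (Some a) z = a * z - 1"

fun abs_alpha :: "complex option \<Rightarrow> ereal" where
  "abs_alpha None = \<infinity>"
| "abs_alpha (Some a) = ereal (norm a)"

definition disk :: "ereal \<Rightarrow> complex set" where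
  "disk s = {z. ereal (norm z) < s}"

end

theory Submission
  imports Defs "HOL-Real_Asymp.Real_Asymp"
begin



definition qq :: "real \<Rightarrow> real \<Rightarrow> real" where
  "qq r R = sqrt (1 - ((R\<^sup>2 - r\<^sup>2) / (R\<^sup>2 + r\<^sup>2))\<^sup>2)"

lemma blaschke_identity:
  fixes a z :: complex and R :: real
  shows "(norm (of_real (R\<^sup>2) - cnj a * z))\<^sup>2 - R\<^sup>2 * (norm (z - a))\<^sup>2
         = (R\<^sup>2 - (norm a)\<^sup>2) * (R\<^sup>2 - (norm z)\<^sup>2)"
proof -
  define X where "X = of_real (R\<^sup>2) - cnj a * z"
  have e1: "complex_of_real ((norm X)\<^sup>2) = X * cnj X" by (rule complex_norm_square)
  have e2: "complex_of_real ((norm (z-a))\<^sup>2) = (z-a) * cnj (z-a)" by (rule complex_norm_square)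
  have e3: "complex_of_real ((norm a)\<^sup>2) = a * cnj a" by (rule complex_norm_square)
  have e4: "complex_of_real ((norm z)\<^sup>2) = z * cnj z" by (rule complex_norm_square)
  have "complex_of_real ((norm X)\<^sup>2 - R\<^sup>2 * (norm (z - a))\<^sup>2)
      = complex_of_real ((R\<^sup>2 - (norm a)\<^sup>2) * (R\<^sup>2 - (norm z)\<^sup>2))"
    apply (simp only: of_real_diff of_real_mult e1 e2 e3 e4)
    apply (simp add: X_def algebra_simps power2_eq_square)
    done
  hence "(norm X)\<^sup>2 - R\<^sup>2 * (norm (z - a))\<^sup>2 = (R\<^sup>2 - (norm a)\<^sup>2) * (R\<^sup>2 - (norm z)\<^sup>2)"
    using of_real_eq_iff by blast
  thus ?thesis unfolding X_def .
qed

lemma qq_facts: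
  assumes "0 < r" "r < R"
  shows "0 \<le> qq r R" "qq r R < 1"
proof -
  have p1: "0 < R\<^sup>2" "0 \<le> r\<^sup>2" "r\<^sup>2 < R\<^sup>2" using assms by (auto intro!: power_strict_mono)
  have p: "0 < R\<^sup>2 + r\<^sup>2" "0 < R\<^sup>2 - r\<^sup>2" using p1 by linarith+
  have h: "0 < (R\<^sup>2 - r\<^sup>2) / (R\<^sup>2 + r\<^sup>2)"
    using p by simp
  have h2: "(R\<^sup>2 - r\<^sup>2) / (R\<^sup>2 + r\<^sup>2) \<le> 1"
    by (subst divide_le_eq_1_pos[OF p(1)]) (use p1 in linarith)
  hence "0 < ((R\<^sup>2 - r\<^sup>2) / (R\<^sup>2 + r\<^sup>2))\<^sup>2" "((R\<^sup>2 - r\<^sup>2) / (R\<^sup>2 + r\<^sup>2))\<^sup>2 \<le> 1"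
    using h by (auto simp: power_le_one)
  thus "0 \<le> qq r R" "qq r R < 1" unfolding qq_def by (auto simp: real_sqrt_lt_1_iff)
qed

lemma blaschke_ineq:
  fixes a z :: complex
  assumes "0 < r" "r < R" "norm a \<le> r" "norm z \<le> r"
  shows "of_real (R\<^sup>2) - cnj a * z \<noteq> 0"
    and "R * norm (z - a) \<le> qq r R * norm (of_real (R\<^sup>2) - cnj a * z)"
proof -
  define Dn where "Dn = norm (of_real (R\<^sup>2) - cnj a * z)"
  have naz: "norm (cnj a * z) \<le> r * r"
  proof -
    have "norm (cnj a * z) = norm a * norm z" by (simp add: norm_mult)
    also have "\<dots> \<le> r * r" by (rule mult_mono) (use assms in auto)
    finally show ?thesis .
  qed
  have "R\<^sup>2 - r*r \<le> Dn"
  proof -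
    have nR: "cmod (complex_of_real (R^2)) = R^2" by (metis norm_of_real abs_power2)
    show ?thesis
    using norm_triangle_ineq2[of "of_real (R\<^sup>2)" "cnj a * z"] naz nR unfolding Dn_def
    by linarith
  qed
  moreover have rr: "r * r < R\<^sup>2" using assms by (simp add: power2_eq_square mult_strict_mono)
  ultimately have Dpos: "0 < Dn" by linarith
  thus "of_real (R\<^sup>2) - cnj a * z \<noteq> 0" unfolding Dn_def by auto
  have Dle: "Dn \<le> R\<^sup>2 + r\<^sup>2"
  proof -
    have nR: "cmod (complex_of_real (R^2)) = R^2" by (metis norm_of_real abs_power2)
    show ?thesis
    using norm_triangle_ineq4[of "of_real (R\<^sup>2)" "cnj a * z"] naz nR unfolding Dn_def
    by (simp only: power2_eq_square[of r])
  qed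
  have p1: "(R\<^sup>2 - r\<^sup>2) \<le> (R\<^sup>2 - (norm a)\<^sup>2)" "(R\<^sup>2 - r\<^sup>2) \<le> (R\<^sup>2 - (norm z)\<^sup>2)"
  proof -
    have "(norm a)\<^sup>2 \<le> r\<^sup>2" "(norm z)\<^sup>2 \<le> r\<^sup>2"
      using power_mono[OF assms(3) norm_ge_zero] power_mono[OF assms(4) norm_ge_zero] by auto
    thus "(R\<^sup>2 - r\<^sup>2) \<le> (R\<^sup>2 - (norm a)\<^sup>2)" "(R\<^sup>2 - r\<^sup>2) \<le> (R\<^sup>2 - (norm z)\<^sup>2)" by linarith+
  qed
  have "r\<^sup>2 \<le> R\<^sup>2" using power_mono[of r R 2] assms by simp
  hence p0: "0 \<le> R\<^sup>2 - r\<^sup>2" by linarith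
  have "(R\<^sup>2 - r\<^sup>2)^2 \<le> (R\<^sup>2 - (norm a)\<^sup>2) * (R\<^sup>2 - (norm z)\<^sup>2)"
    unfolding power2_eq_square[of "R\<^sup>2 - r\<^sup>2"] using p1 p0 by (intro mult_mono[OF p1(1) p1(2)]) linarith+
  have eq: "R\<^sup>2 * (norm (z - a))\<^sup>2 = Dn\<^sup>2 - (R\<^sup>2 - (norm a)\<^sup>2) * (R\<^sup>2 - (norm z)\<^sup>2)"
    using blaschke_identity[of R a z] unfolding Dn_def by linarith
  define t where "t = ((R\<^sup>2 - r\<^sup>2) / (R\<^sup>2 + r\<^sup>2))\<^sup>2"
  have "0 < r\<^sup>2" using assms by simp
  hence Rr: "0 < R\<^sup>2 + r\<^sup>2" using p0 by linarith
  have d1: "0 \<le> Dn / (R\<^sup>2 + r\<^sup>2)" "Dn / (R\<^sup>2 + r\<^sup>2) \<le> 1"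
    using Dpos Rr apply simp
    by (subst divide_le_eq_1_pos[OF Rr]) (rule Dle)
  have "Dn\<^sup>2 * t = (Dn / (R\<^sup>2 + r\<^sup>2))\<^sup>2 * (R\<^sup>2 - r\<^sup>2)\<^sup>2"
    unfolding t_def by (simp add: power_divide)
  also have "\<dots> \<le> 1 * (R\<^sup>2 - r\<^sup>2)\<^sup>2"
    using d1 by (intro mult_right_mono power_le_one) auto
  finally have Dt: "Dn\<^sup>2 * t \<le> (R\<^sup>2 - r\<^sup>2)\<^sup>2" by simp
  have t1: "t \<le> 1" "0 \<le> t"
  proof -
    have "(R\<^sup>2 - r\<^sup>2) / (R\<^sup>2 + r\<^sup>2) \<le> 1" "0 \<le> (R\<^sup>2 - r\<^sup>2) / (R\<^sup>2 + r\<^sup>2)"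
    proof -
      show "(R\<^sup>2 - r\<^sup>2) / (R\<^sup>2 + r\<^sup>2) \<le> 1"
        by (subst divide_le_eq_1_pos[OF Rr]) (use \<open>0 < r\<^sup>2\<close> in linarith)
      show "0 \<le> (R\<^sup>2 - r\<^sup>2) / (R\<^sup>2 + r\<^sup>2)" using p0 Rr by simp
    qed
    thus "t \<le> 1" "0 \<le> t" unfolding t_def by (auto intro: power_le_one)
  qed
  have qq2: "(qq r R)\<^sup>2 = 1 - t" unfolding qq_def t_def[symmetric] using t1 by simp
  have "Dn\<^sup>2 * (1 - t) = Dn\<^sup>2 - Dn\<^sup>2 * t" by (simp add: right_diff_distrib)
  hence "R\<^sup>2 * (norm (z - a))\<^sup>2 \<le> Dn\<^sup>2 * (qq r R)\<^sup>2"
    using eq Dt \<open>(R\<^sup>2 - r\<^sup>2)^2 \<le> _\<close> unfolding qq2 by linarith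
  hence "(R * norm (z - a))\<^sup>2 \<le> (qq r R * Dn)\<^sup>2" by (simp only: power_mult_distrib mult.commute)
  have fin: "R * norm (z - a) \<le> qq r R * Dn"
    by (rule power2_le_imp_le[OF \<open>(R * norm (z - a))\<^sup>2 \<le> (qq r R * Dn)\<^sup>2\<close>])
       (use qq_facts(1)[OF assms(1,2)] Dpos in simp)
  thus "R * norm (z - a) \<le> qq r R * norm (of_real (R\<^sup>2) - cnj a * z)" unfolding Dn_def .
qed




lemma zc_finite_or_zero:
  fixes G :: "complex \<Rightarrow> complex"
  assumes hol: "G holomorphic_on ball 0 R1" and "r < R1" and nz: "\<beta> \<in> ball 0 R1" "G \<beta> \<noteq> 0"
  shows "finite {z\<in>cball 0 r. G z = 0}"
proof (rule ccontr)
  assume inf: "infinite {z\<in>cball 0 r. G z = 0}"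
  have "compact (cball (0::complex) r)" by simp
  then obtain \<xi> where \<xi>: "\<xi> \<in> cball 0 r" "\<xi> islimpt {z\<in>cball 0 r. G z = 0}"
    using inf unfolding compact_eq_Bolzano_Weierstrass by (metis (no_types, lifting) mem_Collect_eq subsetI)
  have sub: "cball 0 r \<subseteq> ball (0::complex) R1" using \<open>r < R1\<close> by auto
  have "G \<beta> = 0"
    by (rule analytic_continuation[OF hol open_ball convex_connected[OF convex_ball] _ _ \<xi>(2)])
       (use sub \<xi>(1) nz in auto)
  with nz show False by simp
qed

lemma zorder_lin: "zorder (\<lambda>w. w - a) z = (if z = a then 1 else 0)"
proof (cases "z = a")
  case True
  have "zorder (\<lambda>w. w - a) a = 1"
    by (rule zorder_eqI[where S=UNIV and g="\<lambda>_. 1"]) auto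
  thus ?thesis using True by simp
next
  case False
  thus ?thesis by (subst zorder_eq_0I) (auto intro!: analytic_intros)
qed

lemma zero_bound:
  fixes G :: "complex \<Rightarrow> complex" and N :: nat
  assumes hol: "G holomorphic_on ball 0 R1" and r: "0 < r" "r < R" "R < R1"
    and zc: "zero_count G (cball 0 r) \<ge> enat N"
    and B: "\<And>w. norm w = R \<Longrightarrow> norm (G w) \<le> B"
    and z: "norm z \<le> r"
  shows "norm (G z) \<le> qq r R ^ N * B"
  using hol zc B z
proof (induction N arbitrary: G z)
  case 0
  have h1: "G holomorphic_on interior (cball 0 R)"
    using 0(1) r by (auto elim!: holomorphic_on_subset)
  have h2: "continuous_on (closure (cball 0 R)) G"
    using 0(1) r by (auto intro!: holomorphic_on_imp_continuous_on elim!: holomorphic_on_subset)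
  have h3: "z \<in> cball 0 R" using 0(4) r by auto
  have "norm (G z) \<le> B"
    by (rule maximum_modulus_frontier[OF h1 h2 bounded_cball _ h3]) (use 0(3) in auto)
  thus ?case by simp
next
  case (Suc N)
  have Bnn: "0 \<le> B" using Suc.prems(3)[of "of_real R"] r by (auto intro: order_trans[OF norm_ge_zero])
  have q: "0 \<le> qq r R" "qq r R < 1" using qq_facts r by auto
  show ?case
  proof (cases "\<forall>w\<in>ball 0 R1. G w = 0")
    case True
    hence "G z = 0" using Suc.prems(4) r by auto
    thus ?thesis using Bnn q by simp
  next
    case False
    then obtain \<beta> where \<beta>: "\<beta> \<in> ball 0 R1" "G \<beta> \<noteq> 0" by auto
    define Z where "Z = {z\<in>cball 0 r. G z = 0}"
    have finZ: "finite Z" unfolding Z_def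
      using zc_finite_or_zero[OF Suc.prems(1) _ \<beta>] r by auto
    have zcG: "zero_count G (cball 0 r) = enat (\<Sum>z\<in>Z. nat (zorder G z))"
      using finZ unfolding zero_count_def Z_def by simp
    with Suc.prems(2) have sumG: "Suc N \<le> (\<Sum>z\<in>Z. nat (zorder G z))" by simp
    hence "Z \<noteq> {}" by auto
    then obtain a where aZ: "a \<in> Z" by auto
    have a: "norm a \<le> r" "G a = 0" using aZ unfolding Z_def by auto
    have ain: "a \<in> interior (ball 0 R1)" using a r by auto
    define G1 where "G1 = (\<lambda>z. if z = a then deriv G a else (G z - G a) / (z - a))"
    have holG1: "G1 holomorphic_on ball 0 R1"
      unfolding G1_def by (rule pole_lemma[OF Suc.prems(1) ain])
    have Gfac: "G w = (w - a) * G1 w" for w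
      using a by (auto simp: G1_def)
    define c where "c = (\<lambda>w. (of_real (R\<^sup>2) - cnj a * w) / of_real R)"
    define H where "H = (\<lambda>w. G1 w * c w)"
    have holH: "H holomorphic_on ball 0 R1"
      unfolding H_def c_def using r by (intro holomorphic_intros holG1) auto
    have cnz: "c w \<noteq> 0" if "norm w \<le> r" for w
      using blaschke_ineq(1)[OF r(1,2) a(1) that] r unfolding c_def by auto
    have HB: "norm (H w) \<le> B" if w: "norm w = R" for w
    proof -
      have wc: "w * cnj w = of_real (R\<^sup>2)"
        using w by (metis complex_norm_square mult.commute)
      have "of_real (R\<^sup>2) - cnj a * w = w * (cnj w - cnj a)"
        using wc by (simp add: algebra_simps)
      hence "norm (of_real (R\<^sup>2) - cnj a * w) = R * norm (w - a)"
        using w by (metis complex_cnj_diff complex_mod_cnj norm_mult)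
      hence "norm (c w) = norm (w - a)" unfolding c_def using r by (simp add: norm_divide)
      hence "norm (H w) = norm (G w)" unfolding H_def Gfac by (simp add: norm_mult)
      thus ?thesis using Suc.prems(3)[OF w] by simp
    qed
    define ZH where "ZH = {z\<in>cball 0 r. H z = 0}"
    have ZH_eq: "ZH = {z\<in>cball 0 r. G1 z = 0}"
      unfolding ZH_def H_def using cnz by auto
    have ZHsub: "ZH \<subseteq> Z" unfolding ZH_eq Z_def using Gfac by auto
    have finZH: "finite ZH" using finite_subset[OF ZHsub finZ] .
    have zcH: "zero_count H (cball 0 r) = enat (\<Sum>z\<in>ZH. nat (zorder H z))"
      using finZH unfolding zero_count_def ZH_def by simp
    have evG: "\<forall>\<^sub>F x in at w. G x \<noteq> 0" if "w \<in> ball 0 R1" for w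
      using non_zero_neighbour_alt[OF Suc.prems(1) open_ball convex_connected[OF convex_ball] that \<beta>]
      by (auto elim: eventually_mono)
    have evG1: "\<forall>\<^sub>F x in at w. G1 x \<noteq> 0" if "w \<in> ball 0 R1" for w
      using evG[OF that] by (auto elim: eventually_mono simp: Gfac)
    have anG1: "G1 analytic_on {w}" if "w \<in> ball 0 R1" for w
      using holG1 that analytic_at by blast
    have anc: "c analytic_on {w}" for w unfolding c_def using r by (intro analytic_intros) auto
    have zG: "zorder G w = (if w = a then 1 else 0) + zorder G1 w" if "w \<in> ball 0 R1" for w
    proof -
      have "zorder (\<lambda>x. (x - a) * G1 x) w = zorder (\<lambda>x. x - a) w + zorder G1 w"
        by (rule zorder_times_analytic) 
           (auto intro!: analytic_intros anG1 that simp: Gfac[symmetric] evG[OF that])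
      thus ?thesis by (simp add: Gfac[abs_def] zorder_lin)
    qed
    have G1ge: "zorder G1 w \<ge> 0" if "w \<in> ball 0 R1" for w
      by (rule zorder_ge_0[OF anG1[OF that] eventually_frequently[OF _ evG1[OF that]]]) simp
    have zH: "zorder H w = zorder G1 w" if "w \<in> ball 0 R1" "norm w \<le> r" for w
    proof -
      have evc: "\<forall>\<^sub>F x in at w. c x \<noteq> 0"
      proof -
        have "continuous_on UNIV c" unfolding c_def using r by (intro continuous_intros) auto
        hence "isCont c w" by (simp add: continuous_on_eq_continuous_at)
        thus ?thesis using tendsto_imp_eventually_ne[of c "c w" "at w" 0] cnz[OF that(2)]
          unfolding isCont_def by blast
      qed
      have "zorder H w = zorder G1 w + zorder c w"
        unfolding H_def
        by (rule zorder_times_analytic[OF anG1[OF that(1)] anc])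
           (use evG1[OF that(1)] evc in \<open>auto elim: eventually_elim2\<close>)
      moreover have "zorder c w = 0" by (rule zorder_eq_0I[OF anc cnz[OF that(2)]])
      ultimately show ?thesis by simp
    qed
    have inball: "w \<in> ball 0 R1" if "w \<in> cball (0::complex) r" for w using that r by auto
    have zG': "nat (zorder G w) = (if w = a then 1 else 0) + nat (zorder G1 w)" if "w \<in> Z" for w
    proof -
      have wb: "w \<in> ball 0 R1" using that inball unfolding Z_def by auto
      show ?thesis using zG[OF wb] G1ge[OF wb] by (cases "w = a") (auto simp: nat_add_distrib)
    qed
    have zH': "nat (zorder H w) = nat (zorder G1 w)" if "w \<in> ZH" for w
    proof -
      have wb: "w \<in> ball 0 R1" "norm w \<le> r" using that inball unfolding ZH_def by auto
      show ?thesis using zH[OF wb] by simp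
    qed
    have "(\<Sum>z\<in>Z. nat (zorder G z)) = (\<Sum>z\<in>Z. (if z = a then 1 else 0) + nat (zorder G1 z))"
      by (intro sum.cong refl zG')
    also have "\<dots> = 1 + (\<Sum>z\<in>Z. nat (zorder G1 z))"
      using finZ aZ by (simp add: sum.distrib sum.delta)
    also have "(\<Sum>z\<in>Z. nat (zorder G1 z)) = (\<Sum>z\<in>ZH. nat (zorder G1 z))"
    proof (rule sum.mono_neutral_right[OF finZ ZHsub])
      show "\<forall>i\<in>Z - ZH. nat (zorder G1 i) = 0"
      proof
        fix w assume w: "w \<in> Z - ZH"
        hence "G1 w \<noteq> 0" "w \<in> ball 0 R1" unfolding ZH_eq Z_def using inball by auto
        thus "nat (zorder G1 w) = 0" using zorder_eq_0I[OF anG1] by simp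
      qed
    qed
    also have "\<dots> = (\<Sum>z\<in>ZH. nat (zorder H z))"
      by (intro sum.cong refl zH'[symmetric])
    finally have "Suc N \<le> 1 + (\<Sum>z\<in>ZH. nat (zorder H z))" using sumG by simp
    hence zcH': "zero_count H (cball 0 r) \<ge> enat N" unfolding zcH by simp
    have IH: "norm (H z) \<le> qq r R ^ N * B"
      by (rule Suc.IH[OF holH zcH' HB Suc.prems(4)])
    have "R * norm (z - a) \<le> qq r R * norm (of_real (R\<^sup>2) - cnj a * z)"
      by (rule blaschke_ineq(2)[OF r(1,2) a(1) Suc.prems(4)])
    have ceq: "c z * of_real R = of_real (R\<^sup>2) - cnj a * z"
      unfolding c_def using r by simp
    have "norm (c z * of_real R) = norm (c z) * R" using r by (simp add: norm_mult)
    hence e: "norm (of_real (R\<^sup>2) - cnj a * z) = norm (c z) * R" unfolding ceq .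
    have e2: "qq r R * (norm (c z) * R) = R * (qq r R * norm (c z))" by (simp add: algebra_simps)
    have "R * norm (z - a) \<le> R * (qq r R * norm (c z))"
      using \<open>R * norm (z - a) \<le> qq r R * norm (of_real (R\<^sup>2) - cnj a * z)\<close> unfolding e e2 .
    hence zc: "norm (z - a) \<le> qq r R * norm (c z)"
      using mult_le_cancel_left_pos[of R] r by auto
    have "norm (G z) = norm (z - a) * norm (G1 z)" by (simp add: Gfac norm_mult)
    also have "\<dots> \<le> qq r R * norm (c z) * norm (G1 z)"
      using zc by (intro mult_right_mono) auto
    also have "\<dots> = qq r R * norm (H z)" by (simp add: H_def norm_mult)
    also have "\<dots> \<le> qq r R * (qq r R ^ N * B)" using IH q by (intro mult_left_mono) auto
    finally show ?thesis by simp
  qed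
qed




lemma poly_has_fps_expansion: "poly p has_fps_expansion fps_of_poly p"
  by (auto simp: has_fps_expansion_def)

lemma poly_coeff_bound:
  fixes D :: "complex poly"
  assumes r: "0 < r" and M: "\<And>z. norm z = r \<Longrightarrow> norm (poly D z) \<le> M"
  shows "norm (coeff D k) \<le> M / r ^ k"
proof -
  have "fps_nth (fps_of_poly D) k = (deriv ^^ k) (poly D) 0 / fact k"
    by (rule fps_nth_fps_expansion[OF poly_has_fps_expansion])
  hence eq: "(deriv ^^ k) (poly D) 0 = fact k * coeff D k" by (simp add: field_simps)
  have "norm ((deriv ^^ k) (poly D) 0) \<le> fact k * M / r ^ k"
    by (rule Cauchy_inequality) (use r M in \<open>auto intro!: holomorphic_intros continuous_intros\<close>)
  hence "fact k * norm (coeff D k) \<le> fact k * (M / r ^ k)"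
    unfolding eq by (simp add: norm_mult)
  thus ?thesis by (subst (asm) mult_le_cancel_left_pos) auto
qed

lemma poly_growth:
  fixes D :: "complex poly"
  assumes deg: "degree D \<le> n" and r: "0 < r" "r \<le> R"
    and M: "\<And>z. norm z = r \<Longrightarrow> norm (poly D z) \<le> M"
    and w: "norm w = R"
  shows "norm (poly D w) \<le> (real n + 1) * (R / r) ^ n * M"
proof -
  have M0: "0 \<le> M" using M[of "of_real r"] r by (auto intro: order_trans[OF norm_ge_zero])
  have K1: "1 \<le> R / r" using r by simp
  have "norm (poly D w) = norm (\<Sum>i\<le>degree D. coeff D i * w ^ i)" by (simp add: poly_altdef)
  also have "\<dots> \<le> (\<Sum>i\<le>degree D. norm (coeff D i) * R ^ i)"
    by (rule order_trans[OF norm_sum]) (simp add: norm_mult norm_power w)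
  also have "\<dots> \<le> (\<Sum>i\<le>degree D. M * (R / r) ^ n)"
  proof (rule sum_mono)
    fix i assume i: "i \<in> {..degree D}"
    have "norm (coeff D i) * R ^ i \<le> M / r ^ i * R ^ i"
      using poly_coeff_bound[OF r(1) M] r by (intro mult_right_mono) auto
    also have "\<dots> = M * (R / r) ^ i" by (simp add: power_divide)
    also have "\<dots> \<le> M * (R / r) ^ n"
      using i deg K1 M0 by (intro mult_left_mono power_increasing) auto
    finally show "norm (coeff D i) * R ^ i \<le> M * (R / r) ^ n" .
  qed
  also have "\<dots> = (real (degree D) + 1) * (M * (R / r) ^ n)" by simp
  also have "\<dots> \<le> (real n + 1) * (M * (R / r) ^ n)"
    using deg M0 K1 by (intro mult_right_mono) auto
  finally show ?thesis by (simp add: mult_ac)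
qed

lemma coeff_G:
  fixes f :: "complex \<Rightarrow> complex" and P :: "complex poly"
  assumes hol: "f holomorphic_on ball 0 \<rho>" "0 < \<rho>" and deg: "degree P \<le> n"
  shows "(deriv ^^ Suc n) (\<lambda>z. (u * z - v) * f z - poly P z) 0 / fact (Suc n)
         = u * ((deriv ^^ n) f 0 / fact n) - v * ((deriv ^^ Suc n) f 0 / fact (Suc n))"
proof -
  have "f analytic_on {0}" unfolding analytic_at using hol by (intro exI[of _ "ball 0 \<rho>"]) auto
  hence F: "f has_fps_expansion fps_expansion f 0"
    by (rule analytic_at_imp_has_fps_expansion_0)
  have "(\<lambda>z. (u * z - v) * f z - poly P z) has_fps_expansion
          (fps_const u * fps_X - fps_const v) * fps_expansion f 0 - fps_of_poly P"
    by (intro has_fps_expansion_diff has_fps_expansion_mult has_fps_expansion_cmult_left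
          has_fps_expansion_fps_X has_fps_expansion_const F poly_has_fps_expansion)
  from fps_nth_fps_expansion[OF this, of "Suc n"]
  have "(deriv ^^ Suc n) (\<lambda>z. (u * z - v) * f z - poly P z) 0 / fact (Suc n) =
        fps_nth ((fps_const u * fps_X - fps_const v) * fps_expansion f 0 - fps_of_poly P) (Suc n)"
    by simp
  also have "(fps_const u * fps_X - fps_const v) * fps_expansion f 0 - fps_of_poly P
      = fps_const u * (fps_X * fps_expansion f 0) - fps_const v * fps_expansion f 0 - fps_of_poly P"
    by (simp add: algebra_simps)
  also have "fps_nth \<dots> (Suc n) = u * fps_nth (fps_expansion f 0) n - v * fps_nth (fps_expansion f 0) (Suc n)"
    using deg by (simp add: coeff_eq_0)
  also have "\<dots> = u * ((deriv ^^ n) f 0 / fact n) - v * ((deriv ^^ Suc n) f 0 / fact (Suc n))"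
    by (simp only: fps_nth_fps_expansion[OF F])
  finally show ?thesis .
qed




lemma key_n:
  fixes f :: "complex \<Rightarrow> complex" and P :: "complex poly" and Q :: "complex \<Rightarrow> complex"
    and fk :: "nat \<Rightarrow> complex"
  assumes fk: "\<And>k. fk k = (deriv ^^ k) f 0 / fact k"
    and hol: "f holomorphic_on ball 0 \<rho>3"
    and rad: "0 < r" "r < R" "R < \<rho>" "\<rho> < \<rho>3"
    and ser: "\<And>z. norm z < \<rho>3 \<Longrightarrow> (\<lambda>k. fk k * z ^ k) sums f z"
    and uv: "u \<noteq> 0" "norm v \<le> norm u / a" "0 < a" "1 < a * \<rho>"
    and Q: "\<And>z. Q z = u * z - v"
    and rec: "\<And>j. j \<ge> n \<Longrightarrow> norm (fk j) * \<rho> ^ j \<le> norm (fk n) * \<rho> ^ n"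
    and fn: "fk n \<noteq> 0"
    and deg: "degree P \<le> n"
    and zc: "zero_count (\<lambda>z. Q z * f z - poly P z) (cball 0 r) \<ge> enat K"
    and small: "qq r R ^ K * (real n + 1) * (R / r) ^ n \<le> 1/2"
  shows "(1 - 1/(a*\<rho>)) * r \<le> 2 * (R + 1/a) / (1 - R/\<rho>) * (qq r R ^ K * (real n + 2) * (R / r) ^ n)"
proof -
  define K0 where "K0 = R / r"
  have small': "qq r R ^ K * (real n + 1) * K0 ^ n \<le> 1/2" using small unfolding K0_def .
  define G where "G = (\<lambda>z. (u * z - v) * f z - poly P z)"
  have Geq: "(\<lambda>z. Q z * f z - poly P z) = G" unfolding G_def Q by simp
  have \<rho>pos: "0 < \<rho>" using rad by linarith
  have holG: "G holomorphic_on ball 0 \<rho>3" unfolding G_def by (intro holomorphic_intros hol)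
  define c0 where "c0 = 1 / (1 - R/\<rho>)"
  have Rr: "R / \<rho> < 1" "0 < R / \<rho>" using rad \<rho>pos by auto
  have c0pos: "0 < c0" unfolding c0_def using Rr by simp
  define E where "E = (\<lambda>z. \<Sum>j. fk (j + n) * z ^ (j + n))"
  define S where "S = (\<Sum>j<n. monom (fk j) j)"
  have polyS: "poly S z = (\<Sum>j<n. fk j * z ^ j)" for z
    unfolding S_def by (simp add: poly_sum poly_monom)
  have fsplit: "f z = poly S z + E z" if "norm z < \<rho>3" for z
  proof -
    have sm: "summable (\<lambda>k. fk k * z ^ k)" using ser[OF that] by (rule sums_summable)
    have "f z = (\<Sum>k. fk k * z ^ k)" using ser[OF that] by (simp add: sums_iff)
    also have "\<dots> = (\<Sum>j. fk (j + n) * z ^ (j + n)) + (\<Sum>j<n. fk j * z ^ j)"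
      by (rule suminf_split_initial_segment[OF sm])
    finally show ?thesis unfolding E_def polyS by simp
  qed
  have Ebound: "norm (E z) \<le> norm (fk n) * norm z ^ n * c0" if "norm z \<le> R" for z
  proof -
    define t where "t = norm z / \<rho>"
    have t: "0 \<le> t" "t \<le> R / \<rho>" using that \<rho>pos unfolding t_def by (auto intro: divide_right_mono)
    hence t1: "t < 1" using Rr by linarith
    have nz: "norm z = \<rho> * t" unfolding t_def using \<rho>pos by simp
    have trm: "norm (fk (j + n) * z ^ (j + n)) \<le> norm (fk n) * norm z ^ n * t ^ j" for j
    proof -
      have "norm (fk (j + n) * z ^ (j + n)) = (norm (fk (j + n)) * \<rho> ^ (j + n)) * t ^ (j + n)"
        by (simp add: norm_mult norm_power nz power_mult_distrib)
      also have "\<dots> \<le> (norm (fk n) * \<rho> ^ n) * t ^ (j + n)"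
        using rec[of "j + n"] t by (intro mult_right_mono) auto
      also have "\<dots> = norm (fk n) * norm z ^ n * t ^ j"
        by (simp add: nz power_add power_mult_distrib)
      finally show ?thesis .
    qed
    have sg: "summable (\<lambda>j. norm (fk n) * norm z ^ n * t ^ j)"
      using t t1 by (intro summable_mult summable_geometric) auto
    have "norm (E z) \<le> (\<Sum>j. norm (fk n) * norm z ^ n * t ^ j)"
      unfolding E_def by (rule norm_suminf_le[OF trm sg])
    also have "\<dots> = norm (fk n) * norm z ^ n * (1 / (1 - t))"
      using t t1 by (simp add: suminf_mult suminf_geometric)
    also have "\<dots> \<le> norm (fk n) * norm z ^ n * c0"
      unfolding c0_def using t t1 Rr by (intro mult_left_mono divide_left_mono) auto
    finally show ?thesis .
  qed
  define A where "A = (norm u * R + norm v) * norm (fk n) * c0"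
  have A0: "0 \<le> A" unfolding A_def using c0pos rad
    by (intro mult_nonneg_nonneg add_nonneg_nonneg) auto
  have QEbound: "norm ((u * z - v) * E z) \<le> A * norm z ^ n" if "norm z \<le> R" for z
  proof -
    have "norm (u * z - v) \<le> norm u * R + norm v"
    proof -
      have "norm (u * z - v) \<le> norm u * norm z + norm v"
        using norm_triangle_ineq4[of "u * z" v] by (simp add: norm_mult)
      also have "\<dots> \<le> norm u * R + norm v" using that by (intro add_right_mono mult_left_mono) auto
      finally show ?thesis .
    qed
    hence "norm ((u * z - v) * E z) \<le> (norm u * R + norm v) * (norm (fk n) * norm z ^ n * c0)"
      unfolding norm_mult using Ebound[OF that] rad by (intro mult_mono) auto
    thus ?thesis unfolding A_def by (simp add: mult_ac)
  qed
  define D where "D = [:-v, u:] * S - P"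
  have polyD: "poly D z = (u * z - v) * poly S z - poly P z" for z
    unfolding D_def by (simp add: algebra_simps)
  have degD: "degree D \<le> n"
  proof (cases n)
    case 0
    thus ?thesis using deg unfolding D_def S_def by simp
  next
    case (Suc m)
    have "degree S \<le> m" unfolding S_def using Suc
      by (intro degree_sum_le) (auto intro: order_trans[OF degree_monom_le])
    moreover have "degree [:-v, u:] \<le> 1" by (rule order_trans[OF degree_pCons_le]) simp
    ultimately have "degree ([:-v, u:] * S) \<le> n"
      using degree_mult_le[of "[:-v, u:]" S] Suc by linarith
    thus ?thesis unfolding D_def using deg by (intro degree_diff_le)
  qed
  have Gsplit: "G z = (u * z - v) * E z + poly D z" if "norm z < \<rho>3" for z
    unfolding G_def polyD fsplit[OF that] by (simp add: algebra_simps)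
  have sph: "sphere (0::complex) r \<subseteq> ball 0 \<rho>3" using rad by auto
  have "\<exists>x\<in>sphere 0 r. \<forall>y\<in>sphere 0 r. norm (G y) \<le> norm (G x)"
  proof (rule continuous_attains_sup)
    show "sphere (0::complex) r \<noteq> {}" using rad by simp
    show "continuous_on (sphere 0 r) (\<lambda>y. norm (G y))"
      by (rule continuous_on_norm[OF continuous_on_subset[OF holomorphic_on_imp_continuous_on[OF holG] sph]])
  qed simp
  then obtain z0 where z0: "norm z0 = r" "\<And>y. norm y = r \<Longrightarrow> norm (G y) \<le> norm (G z0)"
    by auto
  define M where "M = norm (G z0)"
  have M0: "0 \<le> M" unfolding M_def by simp
  have Dr: "norm (poly D z) \<le> M + A * r ^ n" if "norm z = r" for z
  proof -
    have zz: "norm z < \<rho>3" "norm z \<le> R" using that rad by auto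
    have pd: "poly D z = G z - (u * z - v) * E z" using Gsplit[OF zz(1)] by simp
    have "norm (poly D z) \<le> norm (G z) + norm ((u * z - v) * E z)"
      unfolding pd by (rule norm_triangle_ineq4)
    also have "\<dots> \<le> M + A * r ^ n"
      using z0(2)[OF that] QEbound[OF zz(2)] that unfolding M_def by (intro add_mono) auto
    finally show ?thesis .
  qed
  have Rrn: "K0 ^ n * r ^ n = R ^ n" using rad unfolding K0_def by (simp add: power_divide)
  define B where "B = A * R ^ n + (real n + 1) * K0 ^ n * M + (real n + 1) * A * R ^ n"
  have Beq: "(real n + 1) * K0 ^ n * (M + A * r ^ n) = (real n + 1) * K0 ^ n * M + (real n + 1) * A * R ^ n"
  proof -
    have "(real n + 1) * K0 ^ n * (M + A * r ^ n) = (real n + 1) * K0 ^ n * M + (real n + 1) * A * (K0 ^ n * r ^ n)"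
      by (simp add: algebra_simps)
    thus ?thesis unfolding Rrn .
  qed
  have GR: "norm (G w) \<le> B" if "norm w = R" for w
  proof -
    have ww: "norm w < \<rho>3" "norm w \<le> R" using that rad by auto
    have pg: "norm (poly D w) \<le> (real n + 1) * K0 ^ n * (M + A * r ^ n)"
      using poly_growth[OF degD rad(1) less_imp_le[OF rad(2)] Dr that] unfolding K0_def .
    have "norm (G w) \<le> norm ((u * w - v) * E w) + norm (poly D w)"
      unfolding Gsplit[OF ww(1)] by (rule norm_triangle_ineq)
    also have "\<dots> \<le> A * R ^ n + (real n + 1) * K0 ^ n * (M + A * r ^ n)"
      using QEbound[OF ww(2)] pg that by (intro add_mono) auto
    finally show ?thesis unfolding B_def Beq by (simp add: add.assoc)
  qed
  have zcG: "zero_count G (cball 0 r) \<ge> enat K" using zc unfolding Geq .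
  have MB: "M \<le> qq r R ^ K * B"
    unfolding M_def by (rule zero_bound[OF holG rad(1,2) _ zcG GR]) (use rad z0 in auto)
  define X where "X = qq r R ^ K * (real n + 1) * K0 ^ n"
  define Y where "Y = qq r R ^ K * A * R ^ n"
  have q0: "0 \<le> qq r R" using qq_facts rad by auto
  have "qq r R ^ K * B = Y + X * M + Y * (real n + 1)"
    unfolding B_def X_def Y_def by (simp add: algebra_simps)
  hence "M \<le> Y + X * M + Y * (real n + 1)"
    using MB by simp
  moreover have "X \<le> 1/2" using small' unfolding X_def .
  moreover have "X * M \<le> 1/2 * M" using \<open>X \<le> 1/2\<close> M0 by (intro mult_right_mono) auto
  moreover have "Y * (real n + 2) = Y + Y * (real n + 1)" by (simp add: algebra_simps)
  ultimately have Mup: "M \<le> 2 * (qq r R ^ K * A * R ^ n * (real n + 2))"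
    unfolding Y_def[symmetric] by linarith
  have "norm ((deriv ^^ Suc n) G 0) \<le> fact (Suc n) * M / r ^ Suc n"
  proof (rule Cauchy_inequality)
    show "G holomorphic_on ball 0 r" using holG rad by (auto elim!: holomorphic_on_subset)
    show "continuous_on (cball 0 r) G" using holG rad
      by (auto intro!: holomorphic_on_imp_continuous_on elim!: holomorphic_on_subset)
    show "norm (G x) \<le> M" if "norm (0 - x) = r" for x using z0(2)[of x] that unfolding M_def by simp
  qed (use rad in auto)
  moreover have "(deriv ^^ Suc n) G 0 / fact (Suc n) = u * fk n - v * fk (Suc n)"
    unfolding G_def fk by (rule coeff_G[OF hol _ deg]) (use rad in linarith)
  ultimately have "fact (Suc n) * norm (u * fk n - v * fk (Suc n)) \<le> fact (Suc n) * (M / r ^ Suc n)"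
  proof -
    assume n1: "norm ((deriv ^^ Suc n) G 0) \<le> fact (Suc n) * M / r ^ Suc n"
    assume "(deriv ^^ Suc n) G 0 / fact (Suc n) = u * fk n - v * fk (Suc n)"
    hence "(deriv ^^ Suc n) G 0 = (u * fk n - v * fk (Suc n)) * fact (Suc n)"
      by (simp only: divide_eq_eq fact_nonzero not_False_eq_True if_True)
    hence "norm ((deriv ^^ Suc n) G 0) = norm (u * fk n - v * fk (Suc n)) * fact (Suc n)"
      by (simp only: norm_mult norm_fact)
    thus ?thesis using n1 by (simp add: mult.commute)
  qed
  hence "norm (u * fk n - v * fk (Suc n)) \<le> M / r ^ Suc n"
    by (subst (asm) mult_le_cancel_left_pos) auto
  hence low: "norm (u * fk n - v * fk (Suc n)) * r ^ Suc n \<le> M"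
    using rad by (simp add: pos_le_divide_eq)
  have "(norm (fk (Suc n)) * \<rho>) * \<rho> ^ n \<le> norm (fk n) * \<rho> ^ n"
    using rec[of "Suc n"] by (simp add: mult_ac)
  hence "norm (fk (Suc n)) * \<rho> \<le> norm (fk n)"
    using \<rho>pos by (subst (asm) mult_le_cancel_right_pos) auto
  hence fk1: "norm (fk (Suc n)) \<le> norm (fk n) / \<rho>"
    using \<rho>pos by (simp add: pos_le_divide_eq)
  have "norm u * norm (fk n) * (1 - 1/(a*\<rho>)) = norm u * norm (fk n) - norm u / a * (norm (fk n) / \<rho>)"
    using uv \<rho>pos by (simp add: field_simps)
  also have "\<dots> \<le> norm u * norm (fk n) - norm v * norm (fk (Suc n))"
    using uv fk1 by (intro diff_left_mono mult_mono) auto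
  also have "\<dots> \<le> norm (u * fk n - v * fk (Suc n))"
    using norm_triangle_ineq2[of "u * fk n" "v * fk (Suc n)"] by (simp add: norm_mult)
  finally have lowc: "norm u * norm (fk n) * (1 - 1/(a*\<rho>)) \<le> norm (u * fk n - v * fk (Suc n))" .
  have Aup: "A \<le> norm u * (R + 1/a) * norm (fk n) * c0"
  proof -
    have "norm v \<le> norm u * (1/a)" using uv by simp
    moreover have "norm u * (R + 1/a) = norm u * R + norm u * (1/a)" by (simp add: distrib_left)
    ultimately have "norm u * R + norm v \<le> norm u * (R + 1/a)" by linarith
    thus ?thesis unfolding A_def using c0pos by (intro mult_right_mono) auto
  qed
  define W where "W = norm u * norm (fk n)"
  have W: "0 < W" unfolding W_def using uv fn by auto
  have "W * ((1 - 1/(a*\<rho>)) * r) * r ^ n = norm u * norm (fk n) * (1 - 1/(a*\<rho>)) * r ^ Suc n"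
    unfolding W_def by (simp add: algebra_simps)
  also have "\<dots> \<le> M"
  proof -
    have "norm u * norm (fk n) * (1 - 1/(a*\<rho>)) * r ^ Suc n \<le> norm (u * fk n - v * fk (Suc n)) * r ^ Suc n"
      by (rule mult_right_mono[OF lowc]) (use rad in simp)
    thus ?thesis by (rule order_trans[OF _ low])
  qed
  also have "\<dots> \<le> 2 * (qq r R ^ K * A * R ^ n * (real n + 2))" by (rule Mup)
  also have "\<dots> \<le> 2 * (qq r R ^ K * (norm u * (R + 1/a) * norm (fk n) * c0) * R ^ n * (real n + 2))"
    using Aup q0 rad by (intro mult_left_mono mult_right_mono) auto
  also have "\<dots> = W * (2 * (R + 1/a) * c0 * (qq r R ^ K * (real n + 2) * K0 ^ n)) * r ^ n"
    unfolding W_def Rrn[symmetric] by (simp add: algebra_simps add_divide_distrib)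
  finally have h: "(W * ((1 - 1/(a*\<rho>)) * r)) * r ^ n
      \<le> (W * (2 * (R + 1/a) * c0 * (qq r R ^ K * (real n + 2) * K0 ^ n))) * r ^ n" .
  have "W * ((1 - 1/(a*\<rho>)) * r) \<le> W * (2 * (R + 1/a) * c0 * (qq r R ^ K * (real n + 2) * K0 ^ n))"
    using h rad by (subst (asm) mult_le_cancel_right_pos) auto
  hence "(1 - 1/(a*\<rho>)) * r \<le> 2 * (R + 1/a) * c0 * (qq r R ^ K * (real n + 2) * K0 ^ n)"
    using W by (subst (asm) mult_le_cancel_left_pos) auto
  thus ?thesis unfolding c0_def K0_def by simp
qed




lemma half_lim: "(\<lambda>n. (real n + 2) * (1/2::real) ^ n) \<longlonglongrightarrow> 0"
  by real_asymp

lemma seq_to_0: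
  fixes q K0 :: real and N :: "nat \<Rightarrow> int"
  assumes q: "0 \<le> q" "q < 1" and K0: "1 \<le> K0"
    and Nlim: "filterlim (\<lambda>n. real_of_int (N n) / real n) at_top sequentially"
  shows "(\<lambda>n. q ^ nat (N n) * (real n + 2) * K0 ^ n) \<longlonglongrightarrow> 0"
proof -
  have "(\<lambda>c. q ^ c) \<longlonglongrightarrow> 0" using q by (intro LIMSEQ_power_zero) auto
  hence "eventually (\<lambda>c. q ^ c < 1 / (2 * K0)) sequentially"
    using K0 by (intro order_tendstoD) auto
  then obtain c where c: "q ^ c < 1 / (2 * K0)" by (auto simp: eventually_sequentially)
  have qc: "q ^ c * K0 \<le> 1/2" using c K0 by (simp add: field_simps)
  have ev1: "eventually (\<lambda>n. real_of_int (N n) / real n \<ge> real c) sequentially"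
    using Nlim by (simp add: filterlim_at_top)
  have ev: "eventually (\<lambda>n. q ^ nat (N n) * (real n + 2) * K0 ^ n \<le> (real n + 2) * (1/2) ^ n) sequentially"
    using ev1 eventually_gt_at_top[of 0]
  proof eventually_elim
    case (elim n)
    hence "real c * real n \<le> real_of_int (N n)" by (simp add: field_simps)
    hence "real_of_int (int (c * n)) \<le> real_of_int (N n)" by simp
    hence "int (c * n) \<le> N n" by (simp only: of_int_le_iff)
    hence cn: "c * n \<le> nat (N n)" by (metis nat_int nat_mono)
    have "q ^ nat (N n) \<le> q ^ (c * n)" using q cn by (intro power_decreasing) auto
    also have "\<dots> = (q ^ c) ^ n" by (simp add: power_mult)
    finally have "q ^ nat (N n) * K0 ^ n \<le> (q ^ c) ^ n * K0 ^ n" using K0 by (intro mult_right_mono) auto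
    also have "\<dots> = (q ^ c * K0) ^ n" by (simp add: power_mult_distrib)
    also have "\<dots> \<le> (1/2) ^ n" using qc q K0 by (intro power_mono) auto
    finally have "q ^ nat (N n) * K0 ^ n \<le> (1/2) ^ n" .
    hence "(real n + 2) * (q ^ nat (N n) * K0 ^ n) \<le> (real n + 2) * (1/2) ^ n"
      by (intro mult_left_mono) auto
    thus ?case by (simp add: mult_ac)
  qed
  have ev0: "eventually (\<lambda>n. 0 \<le> q ^ nat (N n) * (real n + 2) * K0 ^ n) sequentially"
    using q K0 by (intro always_eventually allI) auto
  show ?thesis by (rule tendsto_sandwich[OF ev0 ev tendsto_const half_lim])
qed




theorem lemma3p2:
  fixes f :: "complex \<Rightarrow> complex" and r :: real and s :: ereal
    and N :: "nat \<Rightarrow> int" and P :: "nat \<Rightarrow> complex poly"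
    and \<alpha> :: "nat \<Rightarrow> complex option"
  assumes hol1: "f holomorphic_on ball 0 1"
    and r: "0 < r" "r < 1"
    and Nmono: "strict_mono N"
    and Nlim: "filterlim (\<lambda>n. real_of_int (N n) / real n) at_top sequentially"
    and Pdeg: "\<And>n. degree (P n) \<le> n"
    and zeros: "\<And>n. zero_count (\<lambda>z. Qnorm (\<alpha> n) z * f z - poly (P n) z) (cball 0 r)
                       \<ge> enat (nat (N n))"
    and s: "1 \<le> s"
    and hols: "f holomorphic_on disk s"
    and liminf: "liminf (\<lambda>n. abs_alpha (\<alpha> n)) > 1 / s"
  shows "\<exists>p :: complex poly. \<forall>z\<in>disk s. f z = poly p z"
proof (rule ccontr)
  assume nopoly: "\<not> (\<exists>p :: complex poly. \<forall>z\<in>disk s. f z = poly p z)"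
  define fk where "fk = (\<lambda>k. (deriv ^^ k) f 0 / fact k)"
  have ballsub: "ball 0 t \<subseteq> disk s" if "ereal t \<le> s" for t
  proof
    fix x :: complex assume "x \<in> ball 0 t"
    hence "ereal (norm x) < ereal t" by simp
    from less_le_trans[OF this that] show "x \<in> disk s" unfolding disk_def by simp
  qed
  have serz: "(\<lambda>k. fk k * z ^ k) sums f z" if "ereal t \<le> s" "norm z < t" for z t
  proof -
    have "f holomorphic_on ball 0 t" using hols ballsub[OF that(1)] by (rule holomorphic_on_subset)
    from holomorphic_power_series[OF this, of z] that show ?thesis by (simp add: fk_def)
  qed
  have inf: "\<exists>j\<ge>J. fk j \<noteq> 0" for J
  proof (rule ccontr)
    assume "\<not> (\<exists>j\<ge>J. fk j \<noteq> 0)"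
    hence z: "\<And>j. j \<ge> J \<Longrightarrow> fk j = 0" by auto
    define p where "p = (\<Sum>j<J. monom (fk j) j)"
    have "\<forall>z\<in>disk s. f z = poly p z"
    proof
      fix z assume "z \<in> disk s"
      hence "ereal (norm z) < s" by (simp add: disk_def)
      then obtain t where t0: "ereal (norm z) < ereal t" "ereal t < s" using ereal_dense2 by blast
      have t: "norm z < t" "ereal t < s" using t0 by auto
      have s1: "(\<lambda>k. fk k * z ^ k) sums f z" using serz[of t z] t by auto
      have s2: "(\<lambda>k. fk k * z ^ k) sums (\<Sum>k\<in>{..<J}. fk k * z ^ k)"
        by (rule sums_finite) (auto simp: z)
      have "f z = (\<Sum>k<J. fk k * z ^ k)" using sums_unique2[OF s1 s2] .
      thus "f z = poly p z" unfolding p_def by (simp add: poly_sum poly_monom)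
    qed
    with nopoly show False by blast
  qed
  obtain a :: real where a: "1 / s < ereal a" "ereal a < liminf (\<lambda>n. abs_alpha (\<alpha> n))"
    using ereal_dense2[OF liminf] by blast
  have s0: "0 < s" by (rule less_le_trans[OF _ s]) simp
  have "0 \<le> 1 / s" using s0 by (cases s) auto
  hence "0 < ereal a" using a(1) by (rule le_less_trans)
  hence a0: "0 < a" by simp
  have inva: "ereal (1 / a) < s"
  proof (cases s)
    case (real x)
    have x0: "0 < x" using real s0 by simp
    have "ereal 1 / ereal x = ereal (1 / x)" using x0 by simp
    hence "ereal (1 / x) < ereal a" using a(1) real by (simp only: one_ereal_def)
    hence "1 / x < a" by simp
    hence "1 / a < x" using a0 x0 by (simp add: field_simps)
    thus ?thesis using real by simp
  qed (use s0 in auto)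
  have rs: "ereal r < s" by (rule less_le_trans[OF _ s]) (use r in simp)
  have evA: "eventually (\<lambda>n. abs_alpha (\<alpha> n) > ereal a) sequentially"
    using less_LiminfD[OF a(2)] .
  define m0 where "m0 = max (1 / a) r"
  have "ereal m0 < s" unfolding m0_def using inva rs by (auto simp: max_def)
  then obtain \<rho>3 where \<rho>30: "ereal m0 < ereal \<rho>3" "ereal \<rho>3 < s" using ereal_dense2 by blast
  have \<rho>3: "m0 < \<rho>3" "ereal \<rho>3 < s" using \<rho>30 by auto
  define \<rho> where "\<rho> = (m0 + \<rho>3) / 2"
  define R where "R = (r + \<rho>) / 2"
  have m0: "1 / a \<le> m0" "r \<le> m0" unfolding m0_def by auto
  have r\<rho>: "r < \<rho>" "\<rho> < \<rho>3" "m0 < \<rho>" unfolding \<rho>_def using m0 \<rho>3 by auto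
  have rad: "0 < r" "r < R" "R < \<rho>" "\<rho> < \<rho>3" using r r\<rho> unfolding R_def by auto
  have a\<rho>: "1 < a * \<rho>"
  proof -
    have "1 / a < \<rho>" using m0 r\<rho> by linarith
    thus ?thesis using a0 by (simp add: field_simps)
  qed
  have hol3: "f holomorphic_on ball 0 \<rho>3"
    by (rule holomorphic_on_subset[OF hols ballsub]) (use \<rho>3 in auto)
  have ser: "\<And>z. norm z < \<rho>3 \<Longrightarrow> (\<lambda>k. fk k * z ^ k) sums f z"
    using serz[of \<rho>3] \<rho>3 by auto
  define b where "b = (\<lambda>k. norm (fk k) * \<rho> ^ k)"
  have b0: "b \<longlonglongrightarrow> 0"
  proof -
    have "(\<lambda>k. fk k * of_real \<rho> ^ k) sums f (of_real \<rho>)" using ser[of "of_real \<rho>"] rad by auto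
    hence "(\<lambda>k. fk k * of_real \<rho> ^ k) \<longlonglongrightarrow> 0" by (intro summable_LIMSEQ_zero sums_summable)
    hence "(\<lambda>k. norm (fk k * of_real \<rho> ^ k)) \<longlonglongrightarrow> 0" by (rule tendsto_norm_zero)
    moreover have "norm (fk k * of_real \<rho> ^ k) = b k" for k
      using rad unfolding b_def by (simp add: norm_mult norm_power)
    ultimately show ?thesis by simp
  qed
  have recd: "\<exists>n\<ge>m. fk n \<noteq> 0 \<and> (\<forall>j\<ge>n. b j \<le> b n)" for m
  proof -
    obtain j where j: "j \<ge> m" "fk j \<noteq> 0" using inf by blast
    have bj: "0 < b j" using j rad unfolding b_def by auto
    have "eventually (\<lambda>k. b k < b j) sequentially" using b0 bj by (intro order_tendstoD) auto
    then obtain K1 where K1: "\<And>k. k \<ge> K1 \<Longrightarrow> b k < b j" by (auto simp: eventually_sequentially)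
    define T where "T = {m..max K1 j}"
    have T: "finite T" "T \<noteq> {}" "j \<in> T" unfolding T_def using j by auto
    have "Max (b ` T) \<in> b ` T" using T by (intro Max_in) auto
    then obtain n where n: "n \<in> T" "b n = Max (b ` T)" by (metis imageE)
    have nmax: "b k \<le> b n" if "k \<in> T" for k
      using Max_ge[of "b ` T" "b k"] T that n by auto
    have "b j \<le> b n" using nmax T by auto
    hence fn: "fk n \<noteq> 0" using bj unfolding b_def by auto
    have "\<forall>j'\<ge>n. b j' \<le> b n"
    proof (intro allI impI)
      fix j' assume "j' \<ge> n"
      show "b j' \<le> b n"
      proof (cases "j' \<le> max K1 j")
        case True
        hence "j' \<in> T" using \<open>j' \<ge> n\<close> n(1) unfolding T_def by auto
        thus ?thesis by (rule nmax)
      next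
        case False
        hence "b j' < b j" using K1 by auto
        thus ?thesis using \<open>b j \<le> b n\<close> by linarith
      qed
    qed
    moreover have "n \<ge> m" using n(1) unfolding T_def by auto
    ultimately show ?thesis using fn by blast
  qed
  define C where "C = 2 * (R + 1/a) / (1 - R/\<rho>)"
  define L where "L = (1 - 1/(a*\<rho>)) * r"
  have Cpos: "0 < C" unfolding C_def using rad a0 by (auto intro!: divide_pos_pos add_pos_pos)
  have Lpos: "0 < L" unfolding L_def using a\<rho> rad a0 by (auto intro!: mult_pos_pos simp: field_simps)
  have q: "0 \<le> qq r R" "qq r R < 1" using qq_facts rad by auto
  have K0: "1 \<le> R / r" using rad by simp
  have lim: "(\<lambda>n. qq r R ^ nat (N n) * (real n + 2) * (R / r) ^ n) \<longlonglongrightarrow> 0"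
    by (rule seq_to_0[OF q K0 Nlim])
  have evS: "eventually (\<lambda>n. qq r R ^ nat (N n) * (real n + 2) * (R / r) ^ n < min (1/2) (L / C)) sequentially"
    using Lpos Cpos by (intro order_tendstoD[OF lim]) auto
  from eventually_conj[OF evS evA] obtain m where m: "\<And>n. n \<ge> m \<Longrightarrow>
      qq r R ^ nat (N n) * (real n + 2) * (R / r) ^ n < min (1/2) (L / C) \<and> abs_alpha (\<alpha> n) > ereal a"
    unfolding eventually_sequentially by blast
  obtain n where n: "n \<ge> m" "fk n \<noteq> 0" "\<And>j. j \<ge> n \<Longrightarrow> b j \<le> b n" using recd[of m] by blast
  define e where "e = qq r R ^ nat (N n) * (real n + 2) * (R / r) ^ n"
  have e: "e < 1/2" "e < L / C" and al: "abs_alpha (\<alpha> n) > ereal a" using m[OF n(1)] unfolding e_def by auto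
  have small: "qq r R ^ nat (N n) * (real n + 1) * (R / r) ^ n \<le> 1/2"
  proof -
    have "qq r R ^ nat (N n) * (real n + 1) * (R / r) ^ n \<le> e"
      unfolding e_def using q K0 by (intro mult_right_mono mult_left_mono) auto
    thus ?thesis using e by linarith
  qed
  have rec: "\<And>j. j \<ge> n \<Longrightarrow> norm (fk j) * \<rho> ^ j \<le> norm (fk n) * \<rho> ^ n"
    using n(3) unfolding b_def .
  have fk: "\<And>k. fk k = (deriv ^^ k) f 0 / fact k" unfolding fk_def by simp
  have key: "L \<le> C * e"
  proof (cases "\<alpha> n")
    case None
    have Q: "\<And>z. Qnorm (\<alpha> n) z = 1 * z - 0" using None by simp
    show ?thesis unfolding L_def C_def e_def
      by (rule key_n[OF fk hol3 rad ser _ _ a0 a\<rho> Q rec n(2) Pdeg zeros small]) (use a0 in auto)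
  next
    case (Some c)
    have ca: "a < norm c" using al Some by simp
    have Q: "\<And>z. Qnorm (\<alpha> n) z = c * z - 1" using Some by simp
    show ?thesis unfolding L_def C_def e_def
      by (rule key_n[OF fk hol3 rad ser _ _ a0 a\<rho> Q rec n(2) Pdeg zeros small])
         (use ca a0 in \<open>auto simp: field_simps\<close>)
  qed
  moreover have "C * e < L" using e(2) Cpos by (simp add: field_simps)
  ultimately show False by linarith
qed


end
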